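(* Let $f:\mathbb{R}^m\to\mathbb{R}^n$ be a ReLU network with $l$ hidden layers and $N$ neurons in total, and let $\mathrm{code}_f:\mathbb{R}^m\to\{0,1\}^N$ be its ReLU code map. For $\vec x,\vec y\in\mathbb{R}^m$ define $\vec x\sim_f\vec y$ iff $d_{\mathrm H}(\mathrm{code}_f(\vec x),\mathrm{code}_f(\vec y))=0$, and let $[\vec x]_f=\{\vec z\in\mathbb{R}^m\mid \vec z\sim_f\vec x\}$ denote the equivalence classes. Then: (1) There is a one-to-one correspondence between the code space $\mathcal{X}_f=\{\mathrm{code}_f(\vec x)\mid \vec x\in\mathbb{R}^m\}$ and the set of equivalence classes $\{[\vec x]_f\mid \vec x\in\mathbb{R}^m\}$. (2) For every $\vec x\in\mathbb{R}^m$, the topological closure $\overline{[\vec x]_f}$ of $[\vec x]_f$ is a polyhedron, i.e. the intersection of a finite number of closed half-spaces (or all of $\mathbb{R}^m$). (3) For every $\vec x\in\mathbb{R}^m$, the equivalence class $[\vec x]_f$ is the disjoint union of the relative interiors $\mathrm{relint}(F)$ of faces $F$ of the polyhedron $P=\overline{[\vec x]_f}$, and these relative interiors form a lattice structure (with $\mathrm{relint}(F_1)\prec\mathrm{relint}(F_2)$ iff $F_1\subseteq F_2$, inherited from the face lattice of $P$ ordered by inclusion).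
   Context: A ReLU network is a function $f(\vec x)=\xi\circ\mathrm{relu}\circ g_l\circ\cdots\circ\mathrm{relu}\circ g_1(\vec x)$, where $\mathrm{relu}(z)=\max\{0,z\}$ is applied componentwise, $\xi$ is an output function, and each $g_k:\mathbb{R}^{n_{k-1}}\to\mathbb{R}^{n_k}$ ($n_0=m$) is affine, $g_k(\vec x)=W_k\vec x+\vec b_k$. The total number of neurons is $N=\sum_{k=1}^l n_k$. The activation vector at layer $k$ is $\vec a_k(\vec x)=(a^{(k)}_1(\vec x),\dots,a^{(k)}_{n_k}(\vec x))=\mathrm{relu}\circ g_k\circ\cdots\circ\mathrm{relu}\circ g_1(\vec x)$. The ReLU code of $\vec x$ is $\mathrm{code}_f(\vec x)=(\beta^{(1)}_1,\dots,\beta^{(1)}_{n_1},\dots,\beta^{(l)}_1,\dots,\beta^{(l)}_{n_l})\in\{0,1\}^N$ with $\beta^{(k)}_i=1$ if $a^{(k)}_i(\vec x)>0$ and $\beta^{(k)}_i=0$ otherwise. $d_{\mathrm H}(a,b)=|\{j\in\{1,\dots,N\}\mid a_j\neq b_j\}|$ is the Hamming distance on $\{0,1\}^N$. For a convex set $F$, $\mathrm{relint}(F)$ is its interior relative to its affine hull. *)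

theory Defs
  imports "HOL-Analysis.Analysis"
begin

text \<open>A ReLU network with input space real^'m is given by its hidden layers.
  The output function xi plays no role for ReLU codes and is omitted.\<close>

definition relu :: "real \<Rightarrow> real" where
  "relu z = max 0 z"

definition affine_row :: "real list \<Rightarrow> real \<Rightarrow> real list \<Rightarrow> real" where
  "affine_row w b a = sum_list (map2 (*) w a) + b"

definition first_layer_act :: "((real^'m) \<times> real) list \<Rightarrow> real^'m \<Rightarrow> real list" where
  "first_layer_act L1 x = map (\<lambda>(w, b). relu (w \<bullet> x + b)) L1"

definition layer_act :: "(real list \<times> real) list \<Rightarrow> real list \<Rightarrow> real list" where
  "layer_act L a = map (\<lambda>(w, b). relu (affine_row w b a)) L"

fun later_acts :: "(real list \<times> real) list list \<Rightarrow> real list \<Rightarrow> real list list" where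
  "later_acts [] a = []"
| "later_acts (L # Ls) a = (let a' = layer_act L a in a' # later_acts Ls a')"

definition activations ::
  "((real^'m) \<times> real) list \<Rightarrow> (real list \<times> real) list list \<Rightarrow> real^'m \<Rightarrow> real list list" where
  "activations L1 Ls x = (let a1 = first_layer_act L1 x in a1 # later_acts Ls a1)"

fun wf_later :: "nat \<Rightarrow> (real list \<times> real) list list \<Rightarrow> bool" where
  "wf_later n [] = True"
| "wf_later n (L # Ls) = (L \<noteq> [] \<and> (\<forall>(w, b) \<in> set L. length w = n) \<and> wf_later (length L) Ls)"

definition wf_relu_net :: "((real^'m) \<times> real) list \<Rightarrow> (real list \<times> real) list list \<Rightarrow> bool" where
  "wf_relu_net L1 Ls = (L1 \<noteq> [] \<and> wf_later (length L1) Ls)"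

text \<open>ReLU code in {0,1}^N, as a list of naturals of length N.\<close>
definition relu_code ::
  "((real^'m) \<times> real) list \<Rightarrow> (real list \<times> real) list list \<Rightarrow> real^'m \<Rightarrow> nat list" where
  "relu_code L1 Ls x = concat (map (map (\<lambda>z. if z > 0 then 1 else 0)) (activations L1 Ls x))"

definition hamming :: "nat list \<Rightarrow> nat list \<Rightarrow> nat" where
  "hamming a b = card {j. j < length a \<and> a ! j \<noteq> b ! j}"

definition relu_equiv ::
  "((real^'m) \<times> real) list \<Rightarrow> (real list \<times> real) list list \<Rightarrow> real^'m \<Rightarrow> real^'m \<Rightarrow> bool" where
  "relu_equiv L1 Ls x y = (hamming (relu_code L1 Ls x) (relu_code L1 Ls y) = 0)"

definition relu_class ::
  "((real^'m) \<times> real) list \<Rightarrow> (real list \<times> real) list list \<Rightarrow> real^'m \<Rightarrow> (real^'m) set" where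
  "relu_class L1 Ls x = {z. relu_equiv L1 Ls z x}"

definition is_incl_lattice :: "'a set set \<Rightarrow> bool" where
  "is_incl_lattice \<F> =
    (\<forall>F1\<in>\<F>. \<forall>F2\<in>\<F>.
       (\<exists>J\<in>\<F>. F1 \<subseteq> J \<and> F2 \<subseteq> J \<and> (\<forall>G\<in>\<F>. F1 \<subseteq> G \<and> F2 \<subseteq> G \<longrightarrow> J \<subseteq> G)) \<and>
       (\<exists>M\<in>\<F>. M \<subseteq> F1 \<and> M \<subseteq> F2 \<and> (\<forall>G\<in>\<F>. G \<subseteq> F1 \<and> G \<subseteq> F2 \<longrightarrow> G \<subseteq> M)))"

end

theory Submission
  imports Defs
begin

definition ev :: "('a::real_inner \<times> real) \<Rightarrow> 'a \<Rightarrow> real" where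
  "ev g z = fst g \<bullet> z + snd g"

definition spset :: "('a::real_inner \<times> real) set \<Rightarrow> ('a \<times> real) set \<Rightarrow> 'a set" where
  "spset S T = {z. (\<forall>g\<in>S. ev g z > 0) \<and> (\<forall>g\<in>T. ev g z \<ge> 0)}"

lemma ev_comb: "ev g ((1 - u) *\<^sub>R x + u *\<^sub>R y) = (1 - u) * ev g x + u * ev g y"
  by (simp add: ev_def inner_add_right algebra_simps)

lemma ev_ge_iff: "(0 \<le> ev g x) = (- snd g \<le> fst g \<bullet> x)"
  by (auto simp: ev_def)
lemma ev_gt_iff: "(0 < ev g x) = (- snd g < fst g \<bullet> x)"
  by (auto simp: ev_def)

lemma ev_eq_iff: "(ev g x = 0) = (fst g \<bullet> x = - snd g)"
  by (auto simp: ev_def)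

lemma Q_eq: "spset {} U = \<Inter> ((\<lambda>g. {x. fst g \<bullet> x \<ge> - snd g}) ` U)"
proof -
  have "(0 \<le> ev g x) = (fst g \<bullet> x \<ge> - snd g)" for g and x :: 'a
    by (auto simp: ev_def)
  then show ?thesis unfolding spset_def by blast
qed

lemma abstract:
  fixes S T :: "('a::euclidean_space \<times> real) set"
  assumes fin: "finite S" "finite T" and Ceq: "C = spset S T" and ne: "C \<noteq> {}"
  shows "closure C = spset {} (S \<union> T) \<and> polyhedron (closure C) \<and>
    (\<exists>\<F>. \<F> \<subseteq> {F. F face_of closure C} \<and> C = \<Union> (rel_interior ` \<F>) \<and>
       (\<forall>F\<in>\<F>. \<forall>G\<in>\<F>. F \<noteq> G \<longrightarrow> rel_interior F \<inter> rel_interior G = {}) \<and>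
       is_incl_lattice \<F>)"
proof -
  define Q where "Q = spset {} (S \<union> T)"
  have Qi: "Q = \<Inter> ((\<lambda>g. {x. fst g \<bullet> x \<ge> - snd g}) ` (S \<union> T))"
    unfolding Q_def by (rule Q_eq)
  have cvxQ: "convex Q" unfolding Qi by (auto intro!: convex_INT convex_halfspace_ge)
  have clQ: "closed Q" unfolding Qi by (auto intro!: closed_INT closed_halfspace_ge)
  have polyQ: "polyhedron Q" unfolding Qi using fin
    by (auto intro!: polyhedron_Inter polyhedron_halfspace_ge)
  have CQ: "C \<subseteq> Q" unfolding Ceq Q_def spset_def by (blast intro: less_imp_le)
  have CQ2: "C = {z \<in> Q. \<forall>g\<in>S. ev g z > 0}" unfolding Ceq Q_def spset_def by (blast intro: less_imp_le)
  obtain c where c: "c \<in> C" using ne by auto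
  have clC: "closure C = Q"
  proof
    show "closure C \<subseteq> Q" using CQ clQ by (simp add: closure_minimal)
    show "Q \<subseteq> closure C"
    proof
      fix y assume y: "y \<in> Q"
      show "y \<in> closure C"
      proof (cases "y = c")
        case True then show ?thesis using c closure_subset by auto
      next
        case False
        have "open_segment c y \<subseteq> C"
        proof
          fix p assume "p \<in> open_segment c y"
          then obtain u where u: "0 < u" "u < 1" "p = (1 - u) *\<^sub>R c + u *\<^sub>R y"
            by (auto simp: in_segment)
          have cS: "\<forall>g\<in>S. ev g c > 0" "\<forall>g\<in>T. ev g c \<ge> 0" using c unfolding Ceq spset_def by blast+
          have yS: "\<forall>g\<in>S \<union> T. ev g y \<ge> 0" using y unfolding Q_def spset_def by blast
          have "\<forall>g\<in>S. ev g p > 0"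
          proof
            fix g assume g: "g \<in> S"
            have "(1 - u) * ev g c > 0" using u cS g by simp
            moreover have "u * ev g y \<ge> 0" using u yS g by simp
            ultimately show "ev g p > 0" using u by (simp add: ev_comb)
          qed
          moreover have "\<forall>g\<in>T. ev g p \<ge> 0"
          proof
            fix g assume g: "g \<in> T"
            have "(1 - u) * ev g c \<ge> 0" using u cS g by simp
            moreover have "u * ev g y \<ge> 0" using u yS g by simp
            ultimately show "ev g p \<ge> 0" using u by (simp add: ev_comb)
          qed
          ultimately show "p \<in> C" unfolding Ceq spset_def by blast
        qed
        then have "closure (open_segment c y) \<subseteq> closure C" by (rule closure_mono)
        then show ?thesis using False by auto
      qed
    qed
  qed
  have K: "rel_interior F \<subseteq> C" if F: "F face_of Q" and z: "z \<in> F" "z \<in> C" for F z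
  proof
    fix p assume p: "p \<in> rel_interior F"
    have FQ: "F \<subseteq> Q" using F face_of_imp_subset by blast
    have pQ: "p \<in> Q" using p FQ rel_interior_subset by blast
    have "ev g p > 0" if g: "g \<in> S" for g
    proof (rule ccontr)
      assume "\<not> ev g p > 0"
      moreover have "ev g p \<ge> 0" using pQ g unfolding Q_def spset_def by blast
      ultimately have p0: "fst g \<bullet> p = - snd g" by (simp add: ev_def)
      have geQ: "\<And>x. x \<in> Q \<Longrightarrow> fst g \<bullet> x \<ge> - snd g" using g unfolding Q_def spset_def ev_ge_iff by blast
      have H: "(Q \<inter> {x. fst g \<bullet> x = - snd g}) face_of Q"
        by (rule face_of_Int_supporting_hyperplane_ge[OF cvxQ geQ])
      have "F \<subseteq> Q \<inter> {x. fst g \<bullet> x = - snd g}"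
        by (rule subset_of_face_of[OF H FQ]) (use p pQ p0 in auto)
      then have "ev g z = 0" using z by (auto simp: ev_def)
      moreover have "ev g z > 0" using z g CQ2 by auto
      ultimately show False by simp
    qed
    then show "p \<in> C" using CQ2 pQ by auto
  qed
  have R: "\<exists>F. F face_of Q \<and> z \<in> rel_interior F" if z: "z \<in> Q" for z
  proof -
    define Act where "Act = {g \<in> S \<union> T. ev g z = 0}"
    define F where "F = \<Inter> (insert Q ((\<lambda>g. Q \<inter> {x. fst g \<bullet> x = - snd g}) ` Act))"
    have Fface: "F face_of Q" unfolding F_def
    proof (rule face_of_Inter)
      fix X assume "X \<in> insert Q ((\<lambda>g. Q \<inter> {x. fst g \<bullet> x = - snd g}) ` Act)"
      then show "X face_of Q"
      proof
        assume "X = Q" then show ?thesis using cvxQ face_of_refl by blast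
      next
        assume "X \<in> (\<lambda>g. Q \<inter> {x. fst g \<bullet> x = - snd g}) ` Act"
        then obtain g where g: "g \<in> Act" "X = Q \<inter> {x. fst g \<bullet> x = - snd g}" by auto
        have geQ: "\<And>x. x \<in> Q \<Longrightarrow> fst g \<bullet> x \<ge> - snd g" using g unfolding Act_def Q_def spset_def ev_ge_iff by blast
        show ?thesis using g face_of_Int_supporting_hyperplane_ge[OF cvxQ geQ] by simp
      qed
    qed auto
    have Fchar: "F = {x \<in> Q. \<forall>g\<in>Act. ev g x = 0}" unfolding F_def ev_eq_iff by blast
    define A where "A = {x. \<forall>g\<in>Act. ev g x = 0}"
    have affA: "affine A" unfolding affine_def A_def
    proof (intro allI impI ballI, clarify)
      fix x y u v g assume "\<forall>g\<in>Act. ev g x = 0" "\<forall>g\<in>Act. ev g y = 0" "u + v = (1::real)" "g \<in> Act"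
      then show "ev g (u *\<^sub>R x + v *\<^sub>R y) = 0"
      proof -
        have "u = 1 - v" using \<open>u + v = 1\<close> by simp
        then show ?thesis using ev_comb[of g "v" x y] \<open>g \<in> Act\<close> \<open>\<forall>g\<in>Act. ev g x = 0\<close> \<open>\<forall>g\<in>Act. ev g y = 0\<close> by simp
      qed
    qed
    have FA: "F \<subseteq> A" using Fchar A_def by auto
    have hA: "affine hull F \<subseteq> A" using FA affA by (simp add: hull_minimal)
    define U where "U = {x. \<forall>g\<in>(S \<union> T) - Act. ev g x > 0}"
    have "U = \<Inter> ((\<lambda>g. {x. fst g \<bullet> x > - snd g}) ` ((S \<union> T) - Act))"
      unfolding U_def ev_gt_iff by blast
    then have oU: "open U" using fin by (auto intro!: open_INT open_halfspace_gt)
    have zge: "\<forall>g\<in>S \<union> T. ev g z \<ge> 0" using z unfolding Q_def spset_def by blast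
    have zU: "z \<in> U" unfolding U_def
    proof (intro CollectI ballI)
      fix g assume "g \<in> (S \<union> T) - Act"
      then show "ev g z > 0" using zge unfolding Act_def by force
    qed
    obtain e where e: "e > 0" "ball z e \<subseteq> U" using oU zU open_contains_ball by blast
    have zF: "z \<in> F" using z Fchar Act_def by auto
    have "ball z e \<inter> affine hull F \<subseteq> F"
    proof
      fix y assume y: "y \<in> ball z e \<inter> affine hull F"
      then have yU: "y \<in> U" and yA: "y \<in> A" using e hA by auto
      have "y \<in> Q" unfolding Q_def spset_def
      proof (intro CollectI conjI ballI)
        fix g assume "g \<in> S \<union> T"
        then show "ev g y \<ge> 0" using yU yA U_def A_def
          by (cases "g \<in> Act") (auto intro: less_imp_le)
      qed auto
      then show "y \<in> F" using yA Fchar A_def by auto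
    qed
    then have "z \<in> rel_interior F" using zF e by (auto simp: mem_rel_interior_ball)
    then show ?thesis using Fface by blast
  qed
  define \<F> where "\<F> = {F. F face_of Q \<and> rel_interior F \<subseteq> C}"
  define hf where "hf X = \<Inter> {G. G face_of Q \<and> X \<subseteq> G}" for X
  have hf_face: "hf X face_of Q" if "X \<subseteq> Q" for X
    unfolding hf_def by (rule face_of_Inter) (use cvxQ face_of_refl that in auto)
  have hf_sub: "X \<subseteq> Q \<Longrightarrow> X \<subseteq> hf X" for X unfolding hf_def by auto
  have hf_min: "G face_of Q \<Longrightarrow> X \<subseteq> G \<Longrightarrow> hf X \<subseteq> G" for X G unfolding hf_def by auto
  have empF: "{} \<in> \<F>" unfolding \<F>_def by auto
  have hf_empty: "hf {} = {}" using hf_min[of "{}" "{}"] by auto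
  have nonempty_meets: "F \<inter> C \<noteq> {}" if "F \<in> \<F>" "F \<noteq> {}" for F
  proof -
    have "rel_interior F \<noteq> {}" using that \<F>_def face_of_imp_convex rel_interior_eq_empty by blast
    then show ?thesis using that \<F>_def rel_interior_subset by blast
  qed
  have hfU: "hf (\<Union>\<G>) \<in> \<F>" if GF: "\<G> \<subseteq> \<F>" for \<G>
  proof (cases "\<Union>\<G> = {}")
    case True then show ?thesis using hf_empty empF by (simp only: True)
  next
    case False
    then obtain F where F: "F \<in> \<G>" "F \<noteq> {}" by auto
    then obtain z where "z \<in> F" "z \<in> C" using nonempty_meets GF by blast
    moreover have "\<Union>\<G> \<subseteq> Q" using GF \<F>_def face_of_imp_subset by blast
    ultimately have "z \<in> hf (\<Union>\<G>)" "z \<in> C" using hf_sub F by blast+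
    then have "rel_interior (hf (\<Union>\<G>)) \<subseteq> C"
      by (intro K[OF hf_face[OF \<open>\<Union>\<G> \<subseteq> Q\<close>]])
    then show ?thesis using hf_face[OF \<open>\<Union>\<G> \<subseteq> Q\<close>] unfolding \<F>_def by blast
  qed
  have lat: "is_incl_lattice \<F>"
    unfolding is_incl_lattice_def
  proof (intro ballI conjI)
    fix F1 F2 assume F1: "F1 \<in> \<F>" and F2: "F2 \<in> \<F>"
    have F1Q: "F1 \<subseteq> Q" and F2Q: "F2 \<subseteq> Q" using F1 F2 unfolding \<F>_def using face_of_imp_subset by blast+
    have "{F1, F2} \<subseteq> \<F>" using F1 F2 by blast
    from hfU[OF this] have J: "hf (F1 \<union> F2) \<in> \<F>" by simp
    have J1: "F1 \<union> F2 \<subseteq> hf (F1 \<union> F2)" using hf_sub[of "F1 \<union> F2"] F1Q F2Q by blast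
    have J2: "\<forall>G\<in>\<F>. F1 \<subseteq> G \<and> F2 \<subseteq> G \<longrightarrow> hf (F1 \<union> F2) \<subseteq> G"
    proof (intro ballI impI)
      fix G assume "G \<in> \<F>" "F1 \<subseteq> G \<and> F2 \<subseteq> G"
      then show "hf (F1 \<union> F2) \<subseteq> G" using hf_min[of G "F1 \<union> F2"] unfolding \<F>_def by blast
    qed
    show "\<exists>J\<in>\<F>. F1 \<subseteq> J \<and> F2 \<subseteq> J \<and> (\<forall>G\<in>\<F>. F1 \<subseteq> G \<and> F2 \<subseteq> G \<longrightarrow> J \<subseteq> G)"
      using J J1 J2 by blast
    define \<G> where "\<G> = {H \<in> \<F>. H \<subseteq> F1 \<inter> F2}"
    have "\<G> \<subseteq> \<F>" unfolding \<G>_def by blast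
    then have M: "hf (\<Union>\<G>) \<in> \<F>" by (rule hfU)
    have I: "F1 \<inter> F2 face_of Q" using F1 F2 unfolding \<F>_def using face_of_Int by blast
    have GQ: "\<Union>\<G> \<subseteq> Q" using F1Q unfolding \<G>_def by blast
    have M1: "hf (\<Union>\<G>) \<subseteq> F1 \<inter> F2" using hf_min[OF I, of "\<Union>\<G>"] unfolding \<G>_def by blast
    have M2: "\<forall>G\<in>\<F>. G \<subseteq> F1 \<and> G \<subseteq> F2 \<longrightarrow> G \<subseteq> hf (\<Union>\<G>)"
    proof (intro ballI impI)
      fix G assume "G \<in> \<F>" "G \<subseteq> F1 \<and> G \<subseteq> F2"
      then have "G \<subseteq> \<Union>\<G>" unfolding \<G>_def by blast
      then show "G \<subseteq> hf (\<Union>\<G>)" using hf_sub[OF GQ] by blast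
    qed
    show "\<exists>M\<in>\<F>. M \<subseteq> F1 \<and> M \<subseteq> F2 \<and> (\<forall>G\<in>\<F>. G \<subseteq> F1 \<and> G \<subseteq> F2 \<longrightarrow> G \<subseteq> M)"
      using M M1 M2 by blast
  qed
  have cover: "C = \<Union> (rel_interior ` \<F>)"
  proof
    show "\<Union> (rel_interior ` \<F>) \<subseteq> C" unfolding \<F>_def by auto
    show "C \<subseteq> \<Union> (rel_interior ` \<F>)"
    proof
      fix z assume zC: "z \<in> C"
      then obtain F where F: "F face_of Q" "z \<in> rel_interior F" using R CQ by blast
      then have "rel_interior F \<subseteq> C" using K zC rel_interior_subset by blast
      then show "z \<in> \<Union> (rel_interior ` \<F>)" using F \<F>_def by blast
    qed
  qed
  have disj: "\<forall>F\<in>\<F>. \<forall>G\<in>\<F>. F \<noteq> G \<longrightarrow> rel_interior F \<inter> rel_interior G = {}"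
  proof (intro ballI impI)
    fix F G assume "F \<in> \<F>" "G \<in> \<F>" "F \<noteq> G"
    then show "rel_interior F \<inter> rel_interior G = {}"
      using face_of_eq[of F Q G] unfolding \<F>_def by blast
  qed
  have sub: "\<F> \<subseteq> {F. F face_of closure C}" using clC unfolding \<F>_def by blast
  have "polyhedron (closure C)" using clC polyQ by simp
  then show ?thesis
    using clC lat cover disj sub unfolding Q_def by blast
qed


definition ind :: "real \<Rightarrow> nat" where "ind z = (if z > 0 then 1 else 0)"

definition codeL :: "(real list \<times> real) list list \<Rightarrow> real list \<Rightarrow> nat list" where
  "codeL Ls a = concat (map (map ind) (later_acts Ls a))"

lemma codeL_Nil [simp]: "codeL [] a = []" by (simp add: codeL_def)

lemma codeL_Cons: "codeL (L # Ls) a = map ind (layer_act L a) @ codeL Ls (layer_act L a)"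
  by (simp add: codeL_def Let_def)

lemma relu_code_eq: "relu_code L1 Ls x = map ind (first_layer_act L1 x) @ codeL Ls (first_layer_act L1 x)"
  by (simp add: relu_code_def activations_def codeL_def Let_def ind_def[abs_def])

lemma length_later: "map length (later_acts Ls a) = map length Ls"
  by (induction Ls arbitrary: a) (auto simp: Let_def layer_act_def)

lemma length_codeL: "length (codeL Ls a) = sum_list (map length Ls)"
proof -
  have "length (codeL Ls a) = sum_list (map length (later_acts Ls a))"
    by (simp add: codeL_def length_concat o_def)
  also have "\<dots> = sum_list (map length Ls)" by (simp only: length_later)
  finally show ?thesis .
qed

lemma length_code: "length (relu_code L1 Ls x) = length L1 + sum_list (map length Ls)"
  by (simp add: relu_code_eq length_codeL first_layer_act_def)

lemma hamming_zero_iff: "length a = length b \<Longrightarrow> hamming a b = 0 \<longleftrightarrow> a = b"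
proof
  assume l: "length a = length b" and h: "hamming a b = 0"
  have "finite {j. j < length a \<and> a ! j \<noteq> b ! j}" by simp
  then have "{j. j < length a \<and> a ! j \<noteq> b ! j} = {}" using h by (simp add: hamming_def)
  then show "a = b" using l by (auto intro: nth_equalityI)
next
  assume "a = b" then show "hamming a b = 0" by (simp add: hamming_def)
qed

lemma code_eq_iff: "hamming (relu_code L1 Ls z) (relu_code L1 Ls x) = 0 \<longleftrightarrow> relu_code L1 Ls z = relu_code L1 Ls x"
  by (rule hamming_zero_iff) (simp add: length_code)

lemma class_eq: "relu_class L1 Ls x = {z. relu_code L1 Ls z = relu_code L1 Ls x}"
  unfolding relu_class_def relu_equiv_def code_eq_iff ..

lemma spset_Int: "spset S T \<inter> spset S' T' = spset (S \<union> S') (T \<union> T')"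
  unfolding spset_def by blast

lemma spset_empty: "spset {(0, 0)} {} = {}"
  by (simp add: spset_def ev_def)

lemma spset_UNIV: "spset {} {} = UNIV"
  by (simp add: spset_def)

definition is_sp :: "'a::real_inner set \<Rightarrow> bool" where
  "is_sp X = (\<exists>S T. finite S \<and> finite T \<and> X = spset S T)"

lemma is_sp_Int: "is_sp X \<Longrightarrow> is_sp Y \<Longrightarrow> is_sp (X \<inter> Y)"
proof -
  assume "is_sp X" "is_sp Y"
  then obtain S T S' T' where "finite S" "finite T" "X = spset S T" "finite S'" "finite T'" "Y = spset S' T'"
    unfolding is_sp_def by blast
  moreover have "X \<inter> Y = spset (S \<union> S') (T \<union> T')" using spset_Int calculation by simp
  ultimately show ?thesis unfolding is_sp_def by (meson finite_UnI)
qed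

lemma is_sp_empty: "is_sp {}"
  unfolding is_sp_def using spset_empty[symmetric] finite.emptyI finite_insert by blast

lemma is_sp_UNIV: "is_sp UNIV"
  unfolding is_sp_def using spset_UNIV[symmetric] finite.emptyI by blast

lemma ind_relu: "ind (relu t) = ind t"
  by (simp add: ind_def relu_def)

lemma ind_eq1: "ind t = 1 \<longleftrightarrow> t > 0" by (simp add: ind_def)
lemma ind_eq0: "ind t = 0 \<longleftrightarrow> \<not> t > 0" by (simp add: ind_def)
lemma ind_01: "ind t = 0 \<or> ind t = 1" by (simp add: ind_def)
lemma ev_neg: "ev (- fst h, - snd h) z = - ev h z" by (simp add: ev_def)
lemma ev_zero: "ev (0, 0) z = 0" by (simp add: ev_def)

lemma pattern_sp:
  fixes Hs :: "('a::real_inner \<times> real) list"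
  assumes "length d = length Hs"
  shows "is_sp {z. map ind (map (\<lambda>h. relu (ev h z)) Hs) = d}"
proof -
  define k where "k = length Hs"
  define S0 where "S0 = (\<lambda>i. if d ! i = 1 then Hs ! i else (0, 0)) ` {i. i < k \<and> d ! i \<noteq> 0}"
  define T0 where "T0 = (\<lambda>i. (- fst (Hs ! i), - snd (Hs ! i))) ` {i. i < k \<and> d ! i = 0}"
  have "{z. map ind (map (\<lambda>h. relu (ev h z)) Hs) = d} = spset S0 T0"
  proof (intro set_eqI iffI)
    fix z assume "z \<in> {z. map ind (map (\<lambda>h. relu (ev h z)) Hs) = d}"
    then have mz: "map ind (map (\<lambda>h. relu (ev h z)) Hs) = d" by simp
    have e: "ind (ev (Hs ! i) z) = d ! i" if "i < k" for i
    proof -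
      have "map ind (map (\<lambda>h. relu (ev h z)) Hs) ! i = d ! i" using mz by simp
      then show ?thesis using that by (simp add: k_def ind_relu)
    qed
    show "z \<in> spset S0 T0" unfolding spset_def S0_def T0_def
    proof (intro CollectI conjI ballI)
      fix g assume "g \<in> (\<lambda>i. if d ! i = 1 then Hs ! i else (0, 0)) ` {i. i < k \<and> d ! i \<noteq> 0}"
      then obtain i where i: "i < k" "d ! i \<noteq> 0" "g = (if d ! i = 1 then Hs ! i else (0, 0))" by auto
      show "ev g z > 0"
      proof (cases "d ! i = 1")
        case True then show ?thesis using e[OF i(1)] i(3) ind_eq1 by simp
      next
        case False then show ?thesis using e[OF i(1)] i(2) ind_01[of "ev (Hs ! i) z"] by simp
      qed
    next
      fix g assume "g \<in> (\<lambda>i. (- fst (Hs ! i), - snd (Hs ! i))) ` {i. i < k \<and> d ! i = 0}"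
      then obtain i where i: "i < k" "d ! i = 0" "g = (- fst (Hs ! i), - snd (Hs ! i))" by auto
      have "\<not> ev (Hs ! i) z > 0" using e[OF i(1)] i(2) ind_eq0 by simp
      then show "ev g z \<ge> 0" using i(3) ev_neg[of "Hs ! i" z] by simp
    qed
  next
    fix z assume z: "z \<in> spset S0 T0"
    have "ind (ev (Hs ! i) z) = d ! i" if i: "i < k" for i
    proof (cases "d ! i = 0")
      case True
      then have "(- fst (Hs ! i), - snd (Hs ! i)) \<in> T0" using i by (auto simp: T0_def)
      then have "ev (- fst (Hs ! i), - snd (Hs ! i)) z \<ge> 0" using z unfolding spset_def by blast
      then have "\<not> ev (Hs ! i) z > 0" using ev_neg[of "Hs ! i" z] by simp
      then show ?thesis using True ind_eq0 by simp
    next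
      case False
      then have "(if d ! i = 1 then Hs ! i else (0, 0)) \<in> S0" using i by (auto simp: S0_def)
      then have "ev (if d ! i = 1 then Hs ! i else (0, 0)) z > 0" using z unfolding spset_def by blast
      show ?thesis
      proof (cases "d ! i = 1")
        case True then show ?thesis using \<open>ev (if d ! i = 1 then Hs ! i else (0, 0)) z > 0\<close> ind_eq1 by simp
      next
        case False then show ?thesis using \<open>ev (if d ! i = 1 then Hs ! i else (0, 0)) z > 0\<close> by (simp add: ev_zero)
      qed
    qed
    then have "map ind (map (\<lambda>h. relu (ev h z)) Hs) = d"
      using assms by (intro nth_equalityI) (simp_all add: k_def ind_relu)
    then show "z \<in> {z. map ind (map (\<lambda>h. relu (ev h z)) Hs) = d}" by simp
  qed
  moreover have "finite S0" "finite T0" unfolding S0_def T0_def by auto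
  ultimately show ?thesis unfolding is_sp_def by blast
qed

lemma step_sp:
  fixes Hs :: "('a::real_inner \<times> real) list"
  assumes IH: "\<And>(Gs :: ('a \<times> real) list) c. is_sp {z. codeL Ls (map (\<lambda>g. ev g z) Gs) = (c :: nat list)}"
  shows "is_sp {z. map ind (map (\<lambda>h. relu (ev h z)) Hs) @ codeL Ls (map (\<lambda>h. relu (ev h z)) Hs) = c}"
proof (cases "length c < length Hs")
  case True
  then have "{z. map ind (map (\<lambda>h. relu (ev h z)) Hs) @ codeL Ls (map (\<lambda>h. relu (ev h z)) Hs) = c} = {}"
  proof (intro equals0I)
    fix z assume "z \<in> {z. map ind (map (\<lambda>h. relu (ev h z)) Hs) @ codeL Ls (map (\<lambda>h. relu (ev h z)) Hs) = c}"
    then have "length c = length Hs + length (codeL Ls (map (\<lambda>h. relu (ev h z)) Hs))"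
      by auto
    then show False using True by simp
  qed
  then show ?thesis using is_sp_empty by simp
next
  case False
  define k where "k = length Hs"
  define d where "d = take k c"
  have ld: "length d = length Hs" using False by (simp add: d_def k_def)
  define Gs' where "Gs' = map (\<lambda>i. if d ! i = 1 then Hs ! i else (0, 0)) [0..<k]"
  have eqset: "{z. map ind (map (\<lambda>h. relu (ev h z)) Hs) @ codeL Ls (map (\<lambda>h. relu (ev h z)) Hs) = c}
     = {z. map ind (map (\<lambda>h. relu (ev h z)) Hs) = d} \<inter> {z. codeL Ls (map (\<lambda>g. ev g z) Gs') = drop k c}"
  proof (intro set_eqI)
    fix z
    have rv: "map (\<lambda>h. relu (ev h z)) Hs = map (\<lambda>g. ev g z) Gs'"
      if p: "map ind (map (\<lambda>h. relu (ev h z)) Hs) = d"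
    proof (rule nth_equalityI)
      show "length (map (\<lambda>h. relu (ev h z)) Hs) = length (map (\<lambda>g. ev g z) Gs')"
        by (simp add: Gs'_def k_def)
    next
      fix i assume "i < length (map (\<lambda>h. relu (ev h z)) Hs)"
      then have i: "i < k" by (simp add: k_def)
      have "ind (relu (ev (Hs ! i) z)) = d ! i" using p i
        by (metis k_def length_map nth_map)
      then show "map (\<lambda>h. relu (ev h z)) Hs ! i = map (\<lambda>g. ev g z) Gs' ! i"
        using i by (auto simp: Gs'_def k_def ind_def relu_def ev_def split: if_splits)
    qed
    show "z \<in> {z. map ind (map (\<lambda>h. relu (ev h z)) Hs) @ codeL Ls (map (\<lambda>h. relu (ev h z)) Hs) = c} \<longleftrightarrow>
      z \<in> {z. map ind (map (\<lambda>h. relu (ev h z)) Hs) = d} \<inter> {z. codeL Ls (map (\<lambda>g. ev g z) Gs') = drop k c}"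
      using rv by (auto simp: append_eq_conv_conj d_def k_def)
  qed
  have P1: "is_sp {z. map ind (map (\<lambda>h. relu (ev h z)) Hs) = d}" by (rule pattern_sp[OF ld])
  have P2: "is_sp {z. codeL Ls (map (\<lambda>g. ev g z) Gs') = drop k c}" by (rule IH)
  show ?thesis unfolding eqset using P1 P2 by (rule is_sp_Int)
qed

lemma affine_row_ev:
  "sum_list (map2 (*) w (map (\<lambda>g. ev g z) Gs)) =
   ev (sum_list (map2 (\<lambda>wi g. wi *\<^sub>R fst g) w Gs), sum_list (map2 (\<lambda>wi g. wi * snd g) w Gs)) z"
proof (induction w arbitrary: Gs)
  case Nil then show ?case by (simp add: ev_def)
next
  case (Cons a w)
  then show ?case
    by (cases Gs) (auto simp: ev_def inner_add_left algebra_simps)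
qed

definition comb :: "real list \<Rightarrow> real \<Rightarrow> ('a::real_inner \<times> real) list \<Rightarrow> 'a \<times> real" where
  "comb w b Gs = (sum_list (map2 (\<lambda>wi g. wi *\<^sub>R fst g) w Gs), sum_list (map2 (\<lambda>wi g. wi * snd g) w Gs) + b)"

lemma ev_add: "ev (a, c) z + b = ev (a, c + b) z" by (simp add: ev_def)

lemma layer_act_ev:
  "layer_act L (map (\<lambda>g. ev g z) Gs) = map (\<lambda>h. relu (ev h z)) (map (\<lambda>(w, b). comb w b Gs) L)"
  by (auto simp: layer_act_def affine_row_def affine_row_ev comb_def ev_add)

lemma later_sp:
  fixes Gs :: "('a::real_inner \<times> real) list"
  shows "is_sp {z. codeL Ls (map (\<lambda>g. ev g z) Gs) = c}"
proof (induction Ls arbitrary: Gs c)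
  case Nil
  show ?case
  proof (cases "c = []")
    case True then show ?thesis using is_sp_UNIV by simp
  next
    case False then show ?thesis using is_sp_empty by simp
  qed
next
  case (Cons L Ls)
  show ?case
    unfolding codeL_Cons layer_act_ev
    by (rule step_sp) (rule Cons.IH)
qed

lemma class_sp: "is_sp (relu_class L1 Ls x)"
proof -
  have f: "first_layer_act L1 z = map (\<lambda>h. relu (ev h z)) L1" for z
    by (auto simp: first_layer_act_def ev_def)
  show ?thesis
    unfolding class_eq relu_code_eq f
    by (rule step_sp) (rule later_sp)
qed


lemma f_code: "{z. hamming (relu_code L1 Ls z) (relu_code L1 Ls x) = 0} = relu_class L1 Ls x"
  unfolding class_eq code_eq_iff ..

theorem theorem1:
  fixes L1 :: "((real^'m) \<times> real) list" and Ls :: "(real list \<times> real) list list"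
  assumes "wf_relu_net L1 Ls"
  shows "bij_betw (\<lambda>c. {z. hamming (relu_code L1 Ls z) c = 0})
           (range (relu_code L1 Ls)) (range (relu_class L1 Ls)) \<and>
         (\<forall>x. polyhedron (closure (relu_class L1 Ls x))) \<and>
         (\<forall>x. \<exists>\<F>. \<F> \<subseteq> {F. F face_of closure (relu_class L1 Ls x)} \<and>
                 relu_class L1 Ls x = \<Union> (rel_interior ` \<F>) \<and>
                 (\<forall>F\<in>\<F>. \<forall>G\<in>\<F>. F \<noteq> G \<longrightarrow> rel_interior F \<inter> rel_interior G = {}) \<and>
                 is_incl_lattice \<F>)"
proof -
  let ?f = "\<lambda>c. {z. hamming (relu_code L1 Ls z) c = 0}"
  have inj: "inj_on ?f (range (relu_code L1 Ls))"
  proof (rule inj_onI)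
    fix c1 c2 assume c1: "c1 \<in> range (relu_code L1 Ls)" and c2: "c2 \<in> range (relu_code L1 Ls)"
      and eq: "?f c1 = ?f c2"
    obtain x1 where x1: "c1 = relu_code L1 Ls x1" using c1 by blast
    obtain x2 where x2: "c2 = relu_code L1 Ls x2" using c2 by blast
    have "x1 \<in> relu_class L1 Ls x1" by (simp add: class_eq)
    then have "x1 \<in> relu_class L1 Ls x2" using eq x1 x2 f_code by metis
    then show "c1 = c2" using x1 x2 by (simp add: class_eq)
  qed
  have img: "?f ` range (relu_code L1 Ls) = range (relu_class L1 Ls)"
  proof -
    have "?f ` range (relu_code L1 Ls) = range (\<lambda>x. ?f (relu_code L1 Ls x))" by (simp add: image_image)
    also have "\<dots> = range (relu_class L1 Ls)" by (simp only: f_code)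
    finally show ?thesis .
  qed
  have A: "polyhedron (closure (relu_class L1 Ls x)) \<and> (\<exists>\<F>. \<F> \<subseteq> {F. F face_of closure (relu_class L1 Ls x)} \<and>
                 relu_class L1 Ls x = \<Union> (rel_interior ` \<F>) \<and>
                 (\<forall>F\<in>\<F>. \<forall>G\<in>\<F>. F \<noteq> G \<longrightarrow> rel_interior F \<inter> rel_interior G = {}) \<and>
                 is_incl_lattice \<F>)" for x
  proof -
    obtain S T where ST: "finite S" "finite T" "relu_class L1 Ls x = spset S T"
      using class_sp[of L1 Ls x] unfolding is_sp_def by blast
    have ne: "relu_class L1 Ls x \<noteq> {}" by (auto simp: class_eq)
    show ?thesis using abstract[OF ST ne] by blast
  qed
  show ?thesis using inj img A unfolding bij_betw_def by blast
qed

end
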